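(* Let $w\in\mathbb{Q}^{V_+}_{\ge0}$ and $b\in\mathbb{Z}^{V_+}_{\ge0}$ be such that $\Pi(R)\cap[\mathbf 0,b]^N\ne\emptyset$ for every route $R$, and let $\mathcal{Q}^*(R)=\min\{\sum_{\xi\in[N]}\sum_{v\in V_+}p_\xi w_vy^\xi_v: y\in\Pi(R)\cap[\mathbf 0,b]^N\}$. Suppose values $\mathcal{Q}^*(R,v)$ are given such that for every route $R$ there exists an optimal solution $y^*$ of this minimization with $\mathcal{Q}^*(R,v)=\sum_{\xi\in[N]}p_\xi w_v(y^* )^\xi_v$ for every $v\in V_+$. Then for every route $R$ and every subroute $R'\subseteq R$, $$\sum_{v\in V_+(R')}\mathcal{Q}^*(R',v)\le\sum_{v\in V_+(R')}\mathcal{Q}^*(R,v).$$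
   Context: $G=(V,E)$ complete undirected graph with $V=\{0\}\cup V_+$ ($0$ depot, $V_+$ customers); $D=(V,A)$ replaces each edge by two opposite arcs. Capacity $C>0$; scenarios $\xi\in[N]$ with demands $d^\xi\in\mathbb{Q}^{V_+}_{\ge0}$, $d^\xi(v)\le C$, and probabilities $p_\xi\ge0$, $\sum_\xi p_\xi=1$. A route $R=(v_1,\dots,v_\ell)$ is the cycle $0,v_1,\dots,v_\ell,0$ through distinct customers, $V_+(R)=\{v_1,\dots,v_\ell\}$, $v_0=v_{\ell+1}=0$; a subroute is $R'=(v_i,\dots,v_j)$, $1\le i\le j\le\ell$. Vectors $y\in\mathbb{R}^{[N]\times V_+}$ have entries $y^\xi_v$. For a route $R$ and $\xi$, $\mathcal{Y}^\xi(R)$ is the set of $y^\xi\in\mathbb{Z}^{V_+}_{\ge0}$ for which there exist $f\in\mathbb{R}^A_{\ge0}$, $g\in\mathbb{R}^{V_+}_{\ge0}$ with $f_{(v_{i-1},v_i)}+d^\xi(v_i)=f_{(v_i,v_{i+1})}+g_{v_i}$ ($i\in[\ell]$), $f_{(v_{i-1},v_i)}\le C$ ($i\in[\ell+1]$), $g_{v_i}\le Cy^\xi_{v_i}$ ($i\in[\ell]$). $\Pi(R)=\mathcal{Y}^1(R)\times\cdots\times\mathcal{Y}^N(R)$. $[\mathbf 0,b]^N=\{y:0\le y^\xi_v\le b_v\}$. *)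

theory Defs
  imports Complex_Main
begin

(* Vertices: 'c option, where None is the depot 0 and Some v is customer v.
   Customers V_+ = UNIV :: 'c set (a finite type).
   Arcs of D: ordered pairs of vertices. *)

definition is_route :: "'c list \<Rightarrow> bool" where
  "is_route R \<longleftrightarrow> R \<noteq> [] \<and> distinct R"

(* the i-th vertex of the cycle 0,v_1,...,v_l,0 for i = 0..l+1 *)
definition rnode :: "'c list \<Rightarrow> nat \<Rightarrow> 'c option" where
  "rnode R i = (if i = 0 \<or> i > length R then None else Some (R ! (i - 1)))"

(* subroute (v_i,...,v_j), 1 <= i <= j <= l *)
definition is_subroute :: "'c list \<Rightarrow> 'c list \<Rightarrow> bool" where
  "is_subroute R' R \<longleftrightarrow>
     (\<exists>i j. 1 \<le> i \<and> i \<le> j \<and> j \<le> length R \<and> R' = drop (i - 1) (take j R))"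

(* Y^xi(R): d is the demand vector of scenario xi, C the capacity *)
definition Yset :: "real \<Rightarrow> ('c \<Rightarrow> real) \<Rightarrow> 'c list \<Rightarrow> ('c \<Rightarrow> int) set" where
  "Yset C d R = {y. (\<forall>v. 0 \<le> y v) \<and>
     (\<exists>(f :: 'c option \<times> 'c option \<Rightarrow> real) (g :: 'c \<Rightarrow> real).
        (\<forall>a. 0 \<le> f a) \<and> (\<forall>v. 0 \<le> g v) \<and>
        (\<forall>i\<in>{1..length R}.
            f (rnode R (i - 1), rnode R i) + d (R ! (i - 1))
              = f (rnode R i, rnode R (i + 1)) + g (R ! (i - 1))) \<and>
        (\<forall>i\<in>{1..length R + 1}. f (rnode R (i - 1), rnode R i) \<le> C) \<and>
        (\<forall>i\<in>{1..length R}. g (R ! (i - 1)) \<le> C * of_int (y (R ! (i - 1)))))}"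

(* Pi(R) = Y^1(R) x ... x Y^N(R); scenarios are [N] = {1..N};
   y :: nat => 'c => int, entries y xi v for xi in [N] *)
definition PiR :: "nat \<Rightarrow> real \<Rightarrow> (nat \<Rightarrow> 'c \<Rightarrow> real) \<Rightarrow> 'c list \<Rightarrow> (nat \<Rightarrow> 'c \<Rightarrow> int) set" where
  "PiR N C d R = {y. \<forall>\<xi>\<in>{1..N}. y \<xi> \<in> Yset C (d \<xi>) R}"

definition box :: "nat \<Rightarrow> ('c \<Rightarrow> int) \<Rightarrow> (nat \<Rightarrow> 'c \<Rightarrow> int) set" where
  "box N b = {y. \<forall>\<xi>\<in>{1..N}. \<forall>v. 0 \<le> y \<xi> v \<and> y \<xi> v \<le> b v}"

definition rcost :: "nat \<Rightarrow> (nat \<Rightarrow> real) \<Rightarrow> ('c::finite \<Rightarrow> real) \<Rightarrow> (nat \<Rightarrow> 'c \<Rightarrow> int) \<Rightarrow> real" where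
  "rcost N p w y = (\<Sum>\<xi>\<in>{1..N}. \<Sum>v\<in>UNIV. p \<xi> * w v * of_int (y \<xi> v))"

end

theory Submission
  imports Defs
begin

lemma rn_L:
  assumes "m < j" "j \<le> length R" "k \<le> j - m"
  shows "(case rnode (drop m (take j R)) k of None \<Rightarrow> rnode R m | Some v \<Rightarrow> Some v) = rnode R (m + k)"
  using assms by (auto simp: rnode_def min_def)

lemma rn_R:
  assumes "m < j" "j \<le> length R" "1 \<le> k" "k \<le> j - m + 1"
  shows "(case rnode (drop m (take j R)) k of None \<Rightarrow> rnode R (j+1) | Some v \<Rightarrow> Some v) = rnode R (m + k)"
  using assms by (cases "k = j - m + 1") (auto simp: rnode_def min_def)

lemma Yset_sub:
  assumes y: "y \<in> Yset C d R" and mj: "m < j" "j \<le> length R"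
    and zy: "\<forall>v\<in>set (drop m (take j R)). z v = y v" and zn: "\<forall>v. 0 \<le> z v"
  shows "z \<in> Yset C d (drop m (take j R))"
proof -
  let ?R' = "drop m (take j R)"
  have len: "length ?R' = j - m" using mj by simp
  have nth: "\<And>k. k < j - m \<Longrightarrow> ?R' ! k = R ! (m + k)" using mj by simp
  from y obtain f g where f0: "\<forall>a. 0 \<le> f a" and g0: "\<forall>v. 0 \<le> (g::'a\<Rightarrow>real) v"
    and eq: "\<forall>i\<in>{1..length R}. f (rnode R (i - 1), rnode R i) + d (R ! (i - 1))
              = f (rnode R i, rnode R (i + 1)) + g (R ! (i - 1))"
    and cap: "\<forall>i\<in>{1..length R + 1}. f (rnode R (i - 1), rnode R i) \<le> C"
    and gy: "\<forall>i\<in>{1..length R}. g (R ! (i - 1)) \<le> C * of_int (y (R ! (i - 1)))"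
    unfolding Yset_def by blast
  define f' where "f' = (\<lambda>(a, b). f (case a of None \<Rightarrow> rnode R m | Some v \<Rightarrow> Some v,
                                      case b of None \<Rightarrow> rnode R (j+1) | Some v \<Rightarrow> Some v))"
  have f'e: "f' (rnode ?R' (k - 1), rnode ?R' k) = f (rnode R (m + k - 1), rnode R (m + k))"
    if "1 \<le> k" "k \<le> j - m + 1" for k
  proof -
    have "(case rnode ?R' (k-1) of None \<Rightarrow> rnode R m | Some v \<Rightarrow> Some v) = rnode R (m + (k-1))"
      using rn_L[OF mj, of "k-1"] that by simp
    moreover have "(case rnode ?R' k of None \<Rightarrow> rnode R (j+1) | Some v \<Rightarrow> Some v) = rnode R (m + k)"
      using rn_R[OF mj, of k] that by simp
    ultimately show ?thesis using that unfolding f'_def by (simp add: algebra_simps)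
  qed
  have f'e2: "f' (rnode ?R' k, rnode ?R' (k + 1)) = f (rnode R (m + k), rnode R (m + k + 1))"
    if "1 \<le> k" "k \<le> j - m" for k
    using f'e[of "k+1"] that by simp
  show ?thesis unfolding Yset_def
  proof (intro CollectI conjI exI[of _ f'] exI[of _ g])
    show "\<forall>v. 0 \<le> z v" by fact
    show "\<forall>a. 0 \<le> f' a" using f0 by (auto simp: f'_def)
    show "\<forall>v. 0 \<le> g v" by fact
    show "\<forall>i\<in>{1..length ?R'}. f' (rnode ?R' (i - 1), rnode ?R' i) + d (?R' ! (i - 1))
              = f' (rnode ?R' i, rnode ?R' (i + 1)) + g (?R' ! (i - 1))"
    proof
      fix i assume i: "i \<in> {1..length ?R'}"
      then have i1: "1 \<le> i" "i \<le> j - m" using len by auto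
      have mi: "m + i \<in> {1..length R}" using i1 mj by auto
      have "?R' ! (i-1) = R ! (m + i - 1)" using nth[of "i-1"] i1 by simp
      moreover have "m + i - 1 = (m+i) - 1" by simp
      ultimately show "f' (rnode ?R' (i - 1), rnode ?R' i) + d (?R' ! (i - 1))
              = f' (rnode ?R' i, rnode ?R' (i + 1)) + g (?R' ! (i - 1))"
        using eq mi f'e[of i] f'e2[of i] i1 by simp
    qed
    show "\<forall>i\<in>{1..length ?R' + 1}. f' (rnode ?R' (i - 1), rnode ?R' i) \<le> C"
    proof
      fix i assume i: "i \<in> {1..length ?R' + 1}"
      then have i1: "1 \<le> i" "i \<le> j - m + 1" using len by auto
      have mi: "m + i \<in> {1..length R + 1}" using i1 mj by auto
      show "f' (rnode ?R' (i - 1), rnode ?R' i) \<le> C"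
        using cap mi f'e[OF i1] by simp
    qed
    show "\<forall>i\<in>{1..length ?R'}. g (?R' ! (i - 1)) \<le> C * of_int (z (?R' ! (i - 1)))"
    proof
      fix i assume i: "i \<in> {1..length ?R'}"
      then have i1: "1 \<le> i" "i \<le> j - m" using len by auto
      have mi: "m + i \<in> {1..length R}" using i1 mj by auto
      have e: "?R' ! (i-1) = R ! (m + i - 1)" using nth[of "i-1"] i1 by simp
      have inR: "?R' ! (i-1) \<in> set ?R'" using i1 len by (intro nth_mem) simp
      show "g (?R' ! (i - 1)) \<le> C * of_int (z (?R' ! (i - 1)))"
        using gy mi e zy inR by (metis add_diff_cancel_left' diff_diff_left)
    qed
  qed
qed

theorem corollary2:
  fixes N :: nat and C :: real
    and d :: "nat \<Rightarrow> 'c::finite \<Rightarrow> real"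
    and p :: "nat \<Rightarrow> real"
    and w :: "'c \<Rightarrow> real" and b :: "'c \<Rightarrow> int"
    and Qv :: "'c list \<Rightarrow> 'c \<Rightarrow> real"
  assumes C_pos: "C > 0"
    and d_rat: "\<forall>\<xi>\<in>{1..N}. \<forall>v. d \<xi> v \<in> \<rat> \<and> 0 \<le> d \<xi> v \<and> d \<xi> v \<le> C"
    and p_nonneg: "\<forall>\<xi>\<in>{1..N}. 0 \<le> p \<xi>"
    and p_sum: "(\<Sum>\<xi>\<in>{1..N}. p \<xi>) = 1"
    and w_rat: "\<forall>v. w v \<in> \<rat> \<and> 0 \<le> w v"
    and b_nonneg: "\<forall>v. 0 \<le> b v"
    and feasible: "\<forall>R. is_route R \<longrightarrow> PiR N C d R \<inter> box N b \<noteq> {}"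
    and Qv_opt: "\<forall>R. is_route R \<longrightarrow>
        (\<exists>ys. ys \<in> PiR N C d R \<inter> box N b \<and>
              (\<forall>y \<in> PiR N C d R \<inter> box N b. rcost N p w ys \<le> rcost N p w y) \<and>
              (\<forall>v. Qv R v = (\<Sum>\<xi>\<in>{1..N}. p \<xi> * w v * of_int (ys \<xi> v))))"
  shows "\<forall>R R'. is_route R \<and> is_subroute R' R \<longrightarrow>
           (\<Sum>v\<in>set R'. Qv R' v) \<le> (\<Sum>v\<in>set R'. Qv R v)"
proof (intro allI impI, elim conjE)
  fix R R' :: "'c list"
  assume rR: "is_route R" and sR: "is_subroute R' R"
  then obtain i j where ij: "1 \<le> i" "i \<le> j" "j \<le> length R" and R': "R' = drop (i - 1) (take j R)"
    unfolding is_subroute_def by blast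
  define m where "m = i - 1"
  have mj: "m < j" "j \<le> length R" using ij by (auto simp: m_def)
  have R'm: "R' = drop m (take j R)" using R' m_def by simp
  have rR': "is_route R'" using rR mj R'm unfolding is_route_def
    by (auto intro: distinct_drop distinct_take)
  obtain ys where ys: "ys \<in> PiR N C d R \<inter> box N b"
     and Qys: "\<forall>v. Qv R v = (\<Sum>\<xi>\<in>{1..N}. p \<xi> * w v * of_int (ys \<xi> v))"
    using Qv_opt rR by blast
  obtain ys' where ys': "ys' \<in> PiR N C d R' \<inter> box N b"
     and opt: "\<forall>y \<in> PiR N C d R' \<inter> box N b. rcost N p w ys' \<le> rcost N p w y"
     and Qys': "\<forall>v. Qv R' v = (\<Sum>\<xi>\<in>{1..N}. p \<xi> * w v * of_int (ys' \<xi> v))"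
    using Qv_opt rR' by blast
  define z where "z = (\<lambda>\<xi> v. if v \<in> set R' then ys \<xi> v else ys' \<xi> v)"
  have zP: "z \<in> PiR N C d R'"
    unfolding PiR_def
  proof (intro CollectI ballI)
    fix \<xi> assume x: "\<xi> \<in> {1..N}"
    have "ys \<xi> \<in> Yset C (d \<xi>) R" using ys x unfolding PiR_def by auto
    moreover have "\<forall>v. 0 \<le> z \<xi> v" using ys ys' x unfolding z_def box_def by auto
    ultimately show "z \<xi> \<in> Yset C (d \<xi>) R'"
      using Yset_sub[of "ys \<xi>" C "d \<xi>" R m j "z \<xi>"] mj R'm ys x
      unfolding z_def PiR_def by auto
  qed
  have zB: "z \<in> box N b" using ys ys' unfolding z_def box_def by auto
  have le: "rcost N p w ys' \<le> rcost N p w z" using opt zP zB by blast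
  define F where "F = (\<lambda>y v. \<Sum>\<xi>\<in>{1..N}. p \<xi> * w v * of_int (y \<xi> v))"
  have rc: "rcost N p w y = (\<Sum>v\<in>set R'. F y v) + (\<Sum>v\<in>UNIV - set R'. F y v)" for y
  proof -
    have "rcost N p w y = (\<Sum>v\<in>UNIV. F y v)" unfolding rcost_def F_def by (rule sum.swap)
    also have "\<dots> = (\<Sum>v\<in>set R'. F y v) + (\<Sum>v\<in>UNIV - set R'. F y v)"
      by (metis add.commute finite sum.subset_diff top_greatest)
    finally show ?thesis .
  qed
  have o: "(\<Sum>v\<in>UNIV - set R'. F z v) = (\<Sum>v\<in>UNIV - set R'. F ys' v)"
    by (rule sum.cong) (auto simp: F_def z_def)
  have i: "(\<Sum>v\<in>set R'. F z v) = (\<Sum>v\<in>set R'. F ys v)"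
    by (rule sum.cong) (auto simp: F_def z_def)
  have "(\<Sum>v\<in>set R'. F ys' v) \<le> (\<Sum>v\<in>set R'. F ys v)"
    using le rc[of ys'] rc[of z] o i by linarith
  then show "(\<Sum>v\<in>set R'. Qv R' v) \<le> (\<Sum>v\<in>set R'. Qv R v)"
    using Qys Qys' by (simp add: F_def)
qed

end
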